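(* For every $n\in\mathbb{N}$, let $$\Omega_n=\{x\in(0,1)\setminus\mathbb{Q}:\ g_k(x)\in\{1,2,\dots,n\}\ \text{for all } k\in\mathbb{N}\},$$ where $g_k(x)$ denotes the $k$-th symbol of $x$ in its $\bar O^1$-expansion. Then the Hausdorff dimension of $\Omega_n$ is $\dim_H(\Omega_n)=0$ for every $n\in\mathbb{N}$.
   Context: Every irrational $x\in(0,1)$ has a unique representation ($\bar O^1$-expansion, the difference form of the Ostrogradsky–Sierpiński–Pierce expansion) $$x=\sum_{k=1}^\infty\frac{(-1)^{k-1}}{g_1(g_1+g_2)\cdots(g_1+g_2+\dots+g_k)},\qquad g_k=g_k(x)\in\mathbb{N}=\{1,2,3,\dots\},$$ and conversely every infinite sequence of positive integers $(g_k)$ gives an irrational number in $(0,1)$ via this series. The numbers $g_k(x)$ are called the $\bar O^1$-symbols of $x$. *)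

theory Defs
  imports "HOL-Analysis.Analysis"
begin

definition hausdorff_pre :: "real \<Rightarrow> real \<Rightarrow> 'a::metric_space set \<Rightarrow> ennreal" where
  "hausdorff_pre s \<delta> E =
     (INF U \<in> {U :: nat \<Rightarrow> 'a set. E \<subseteq> (\<Union>i. U i) \<and> (\<forall>i. bounded (U i) \<and> diameter (U i) \<le> \<delta>)}.
        (\<Sum>i. ennreal (diameter (U i) powr s)))"

definition hausdorff_measure :: "real \<Rightarrow> 'a::metric_space set \<Rightarrow> ennreal" where
  "hausdorff_measure s E = (SUP \<delta> \<in> {0<..}. hausdorff_pre s \<delta> E)"

text \<open>dim_H E = inf of s > 0 with H^s(E) = 0 (infimum of the empty set is +infinity).\<close>
definition hausdorff_dim :: "'a::metric_space set \<Rightarrow> ereal" where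
  "hausdorff_dim E = Inf {ereal s | s. 0 < s \<and> hausdorff_measure s E = 0}"

text \<open>Sequences are indexed from 0 internally: g 0 is the paper's g_1.
  Term k (0-based) is (-1)^k / prod_{j<=k} (g_0 + ... + g_j).\<close>
definition obar_term :: "(nat \<Rightarrow> nat) \<Rightarrow> nat \<Rightarrow> real" where
  "obar_term g k = (-1) ^ k / (\<Prod>j\<le>k. real (\<Sum>i\<le>j. g i))"

definition obar_digits :: "real \<Rightarrow> nat \<Rightarrow> nat" where
  "obar_digits x = (THE g. (\<forall>k. 1 \<le> g k) \<and> obar_term g sums x)"

definition obar_symbol :: "nat \<Rightarrow> real \<Rightarrow> nat" where
  "obar_symbol k x = obar_digits x (k - 1)"

definition Omega :: "nat \<Rightarrow> real set" where
  "Omega n = {x \<in> {0<..<1} - \<rat>. \<forall>k\<ge>1. obar_symbol k x \<in> {1..n}}"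

end

theory Submission
  imports Defs
begin


definition A :: "(nat \<Rightarrow> nat) \<Rightarrow> nat \<Rightarrow> real" where
  "A q k = 1 / (\<Prod>j\<le>k. real (q j))"

definition incr :: "(nat \<Rightarrow> nat) \<Rightarrow> bool" where
  "incr q \<longleftrightarrow> 1 \<le> q 0 \<and> (\<forall>k. q k < q (Suc k))"

definition T :: "(nat \<Rightarrow> nat) \<Rightarrow> real" where
  "T q = (\<Sum>k. (-1)^k * A q k)"

lemma incr_ge: "incr q \<Longrightarrow> Suc k \<le> q k"
proof (induction k)
  case 0 then show ?case by (simp add: incr_def)
next
  case (Suc k) then show ?case unfolding incr_def by (metis Suc_le_eq le_less_trans)
qed

lemma prod_ge_fact: "incr q \<Longrightarrow> fact (Suc k) \<le> (\<Prod>j\<le>k. real (q j))"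
proof (induction k)
  case 0 then show ?case using incr_ge[of q 0] by simp
next
  case (Suc k)
  have "fact (Suc (Suc k)) = real (Suc (Suc k)) * fact (Suc k)" by simp
  also have "\<dots> \<le> real (q (Suc k)) * (\<Prod>j\<le>k. real (q j))"
    using Suc incr_ge[OF Suc.prems, of "Suc k"] by (intro mult_mono) auto
  finally show ?case by (simp add: mult.commute)
qed

lemma prodq_pos: "incr q \<Longrightarrow> 0 < (\<Prod>j\<le>k. real (q j))"
  using prod_ge_fact[of q k] by (smt (verit) fact_gt_zero)

lemma A_pos: "incr q \<Longrightarrow> 0 < A q k"
  using prodq_pos[of q k] by (simp add: A_def)

lemma A_le: "incr q \<Longrightarrow> A q k \<le> 1 / fact (Suc k)"
  unfolding A_def using prod_ge_fact[of q k]
  by (intro frac_le) (auto simp del: fact_Suc)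

lemma A_Suc: "A q (Suc k) = A q k / real (q (Suc k))"
  by (simp add: A_def)

lemma A_dec: "incr q \<Longrightarrow> A q (Suc k) < A q k"
  using A_pos[of q k] incr_ge[of q "Suc k"] unfolding A_Suc
  by (simp add: divide_less_eq)

lemma fact_inv_lim: "(\<lambda>k. 1 / fact (Suc k) :: real) \<longlonglongrightarrow> 0"
proof (rule Lim_null_comparison[where g="\<lambda>k. 1 / real (Suc k)"])
  show "(\<lambda>k. 1 / real (Suc k)) \<longlonglongrightarrow> 0"
    using LIMSEQ_inverse_real_of_nat by (simp add: inverse_eq_divide)
  show "\<forall>\<^sub>F k in sequentially. norm (1 / fact (Suc k) :: real) \<le> 1 / real (Suc k)"
  proof (intro always_eventually allI)
    fix k
    have h: "real (Suc k) \<le> fact (Suc k)"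
      by (metis fact_ge_self of_nat_fact of_nat_le_iff)
    have p: "0 < (fact (Suc k) :: real) * real (Suc k)"
      by (intro mult_pos_pos) (simp_all del: fact_Suc)
    have "1 / fact (Suc k) \<le> 1 / (real (Suc k))"
      by (rule divide_left_mono[OF h _ p]) simp
    moreover have "norm (1 / fact (Suc k) :: real) = 1 / fact (Suc k)"
      by (simp del: fact_Suc)
    ultimately show "norm (1 / fact (Suc k) :: real) \<le> 1 / real (Suc k)" by simp
  qed
qed

lemma A_lim: "incr q \<Longrightarrow> A q \<longlonglongrightarrow> 0"
proof (rule Lim_null_comparison[OF _ fact_inv_lim])
  assume q: "incr q"
  show "\<forall>\<^sub>F x in sequentially. norm (A q x) \<le> 1 / fact (Suc x)"
    using A_le[OF q] less_imp_le[OF A_pos[OF q]] by (intro always_eventually allI) (simp del: fact_Suc)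
qed

lemma leib:
  assumes "incr q"
  shows "summable (\<lambda>k. (-1)^k * A q k)"
    "\<And>n. (\<Sum>i<2*n. (-1)^i*A q i) \<le> T q"
    "\<And>n. T q \<le> (\<Sum>i<2*n+1. (-1)^i*A q i)"
proof -
  have H: "\<And>n. 0 \<le> A q n" "\<And>n. A q (Suc n) \<le> A q n"
    using A_pos[OF assms] A_dec[OF assms] by (auto intro: less_imp_le)
  note L = summable_Leibniz'[OF A_lim[OF assms] H(1) H(2)]
  show "summable (\<lambda>k. (-1)^k * A q k)" by (rule L(1))
  show "\<And>n. (\<Sum>i<2*n. (-1)^i*A q i) \<le> T q" unfolding T_def by (rule L(2))
  show "\<And>n. T q \<le> (\<Sum>i<2*n+1. (-1)^i*A q i)" unfolding T_def by (rule L(4))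
qed

lemma T_sums: "incr q \<Longrightarrow> (\<lambda>k. (-1)^k * A q k) sums T q"
  unfolding T_def by (rule summable_sums[OF leib(1)])

lemma T_rem:
  assumes "incr q"
  shows "\<bar>T q - (\<Sum>k<m. (-1)^k * A q k)\<bar> \<le> A q m"
proof (cases "even m")
  case True
  then obtain n where m: "m = 2*n" by auto
  have "(\<Sum>i<2*n+1. (-1)^i*A q i) = (\<Sum>i<2*n. (-1)^i*A q i) + A q (2*n)" by simp
  then show ?thesis using leib(2)[OF assms, of n] leib(3)[OF assms, of n] m by auto
next
  case False
  then obtain n where m: "m = 2*n+1" by (metis oddE)
  have "(\<Sum>i<2*(n+1). (-1)^i*A q i) = (\<Sum>i<2*n+1. (-1)^i*A q i) - A q (2*n+1)" by simp
  then show ?thesis using leib(2)[OF assms, of "n+1"] leib(3)[OF assms, of n] m by auto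
qed

lemma T_bounds:
  assumes "incr q"
  shows "1 / real (q 0 + 1) < T q" "T q < 1 / real (q 0)"
proof -
  have a0: "A q 0 = 1 / real (q 0)" by (simp add: A_def)
  have a1: "A q 1 = A q 0 / real (q 1)" using A_Suc[of q 0] by simp
  have q1: "q 1 \<ge> q 0 + 1" using assms unfolding incr_def by (metis Suc_eq_plus1 Suc_le_eq One_nat_def)
  have q0: "q 0 \<ge> 1" using assms incr_def by auto
  have "(\<Sum>i<2*2. (-1)^i*A q i) = A q 0 - A q 1 + (A q 2 - A q 3)"
    by (simp add: eval_nat_numeral)
  moreover have "A q 3 < A q 2" using A_dec[OF assms, of 2] by (simp add: eval_nat_numeral)
  moreover have "A q 0 - A q 1 \<ge> 1 / real (q 0 + 1)"
  proof -
    have "A q 1 \<le> A q 0 / real (q 0 + 1)" unfolding a1 using A_pos[OF assms, of 0] q1 q0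
      by (intro divide_left_mono) auto
    then have "A q 0 - A q 1 \<ge> A q 0 * (1 - 1 / real (q 0 + 1))" by (simp add: algebra_simps)
    also have "A q 0 * (1 - 1 / real (q 0 + 1)) = 1 / real (q 0 + 1)"
      unfolding a0 using q0 by (simp add: field_simps)
    finally show ?thesis .
  qed
  ultimately show "1 / real (q 0 + 1) < T q" using leib(2)[OF assms, of 2] by linarith
  have "(\<Sum>i<2*1+1. (-1)^i*A q i) = A q 0 - A q 1 + A q 2"
    by (simp add: eval_nat_numeral)
  moreover have "A q 2 < A q 1" using A_dec[OF assms, of 1] by (simp add: eval_nat_numeral)
  ultimately show "T q < 1 / real (q 0)" using leib(3)[OF assms, of 1] a0 by linarith
qed

lemma T_floor:
  assumes "incr q" shows "nat \<lfloor>1 / T q\<rfloor> = q 0"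
proof -
  have q0: "q 0 \<ge> 1" using assms incr_def by auto
  have "0 < 1 / real (q 0 + 1)" by simp
  then have tp: "T q > 0" using T_bounds(1)[OF assms] by linarith
  have "real (q 0) * T q < 1" using T_bounds(2)[OF assms] q0
    by (simp add: less_divide_eq mult.commute)
  then have l: "real (q 0) < 1 / T q" using tp by (simp add: less_divide_eq)
  have "1 < (real (q 0) + 1) * T q" using T_bounds(1)[OF assms] q0
    by (simp add: divide_less_eq mult.commute add.commute)
  then have u: "1 / T q < real (q 0) + 1" using tp by (simp add: divide_less_eq)
  have "\<lfloor>1 / T q\<rfloor> = int (q 0)" by (rule floor_unique) (use l u in auto)
  then show ?thesis by simp
qed

lemma incr_shift: "incr q \<Longrightarrow> incr (q \<circ> Suc)"
  using incr_ge[of q 1] unfolding incr_def by simp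

lemma A_shift: "A q (Suc k) = A (q \<circ> Suc) k / real (q 0)"
  unfolding A_def by (subst prod.atMost_Suc_shift) (simp add: field_simps)

lemma T_shift:
  assumes "incr q" shows "T q = (1 - T (q \<circ> Suc)) / real (q 0)"
proof -
  have "(\<lambda>k. (-1)^k * A (q \<circ> Suc) k) sums T (q \<circ> Suc)" by (rule T_sums[OF incr_shift[OF assms]])
  then have "(\<lambda>k. (-1 / real (q 0)) * ((-1)^k * A (q \<circ> Suc) k)) sums ((-1 / real (q 0)) * T (q \<circ> Suc))"
    by (rule sums_mult)
  moreover have "(-1 / real (q 0)) * ((-1)^k * A (q \<circ> Suc) k) = (-1)^(Suc k) * A q (Suc k)" for k
    by (simp add: A_shift)
  ultimately have "(\<lambda>k. (-1)^(Suc k) * A q (Suc k)) sums ((-1 / real (q 0)) * T (q \<circ> Suc))" by simp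
  then have "(\<lambda>k. (-1)^k * A q k) sums ((-1 / real (q 0)) * T (q \<circ> Suc) + (-1)^0 * A q 0)"
    by (rule sums_Suc_iff[THEN iffD1])
  moreover have "(-1::real)^0 * A q 0 = 1 / real (q 0)" by (simp add: A_def)
  ultimately have "(\<lambda>k. (-1)^k * A q k) sums ((-1 / real (q 0)) * T (q \<circ> Suc) + 1 / real (q 0))"
    by simp
  then have "T q = (-1 / real (q 0)) * T (q \<circ> Suc) + 1 / real (q 0)"
    using sums_unique2[OF T_sums[OF assms]] by simp
  moreover have "(1 - T (q \<circ> Suc)) / real (q 0) = 1 / real (q 0) - T (q \<circ> Suc) / real (q 0)"
    by (rule diff_divide_distrib)
  moreover have "- 1 / real (q 0) * T (q \<circ> Suc) = - (T (q \<circ> Suc) / real (q 0))"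
    by simp
  ultimately show ?thesis by linarith
qed

lemma T_inj_aux: "\<forall>q q'. incr q \<longrightarrow> incr q' \<longrightarrow> T q = T q' \<longrightarrow> q k = q' k"
proof (induction k)
  case 0 show ?case
  proof (intro allI impI)
    fix q q' assume h: "incr q" "incr q'" "T q = T q'"
    show "q 0 = q' 0" using T_floor[OF h(1)] T_floor[OF h(2)] h(3) by (metis (no_types))
  qed
next
  case (Suc k)
  show ?case
  proof (intro allI impI)
    fix q q' assume h: "incr q" "incr q'" "T q = T q'"
    have e: "q 0 = q' 0" using T_floor[OF h(1)] T_floor[OF h(2)] h(3) by (metis (no_types))
    have q0: "real (q 0) > 0" using h incr_def by auto
    have 1: "1 - T (q \<circ> Suc) = real (q 0) * T q" using T_shift[OF h(1)] q0
      by (simp add: field_simps)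
    have 2: "1 - T (q' \<circ> Suc) = real (q' 0) * T q'" using T_shift[OF h(2)] q0 e
      by (simp add: field_simps)
    have "real (q 0) * T q = real (q' 0) * T q'" using e h(3) by simp
    then have "T (q \<circ> Suc) = T (q' \<circ> Suc)" using 1 2 by linarith
    then have "(q \<circ> Suc) k = (q' \<circ> Suc) k"
      using Suc.IH[rule_format, OF incr_shift[OF h(1)] incr_shift[OF h(2)]] by simp
    then show "q (Suc k) = q' (Suc k)" by simp
  qed
qed

lemma T_inj: "incr q \<Longrightarrow> incr q' \<Longrightarrow> T q = T q' \<Longrightarrow> q = q'"
proof (rule ext)
  fix k assume "incr q" "incr q'" "T q = T q'"
  then show "q k = q' k" using T_inj_aux[of k] by simp
qed



lemma step:
  fixes y :: real
  assumes "0 < y" "y < 1" "y \<notin> \<rat>"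
  defines "b \<equiv> nat \<lfloor>1/y\<rfloor>"
  shows "1 \<le> b" "0 < 1 - real b * y" "1 - real b * y < 1 / real (b+1)" "1 - real b*y \<notin> \<rat>"
proof -
  have y1: "1 < 1/y" using assms by (simp add: less_divide_eq)
  have "0 \<le> \<lfloor>1/y\<rfloor>" using y1 assms(1) by simp
  then have fl: "real b = of_int \<lfloor>1/y\<rfloor>" unfolding b_def by (rule of_nat_nat)
  have lo: "real b \<le> 1/y" using fl by (simp add: of_int_floor_le)
  have hi: "1/y < real b + 1" using fl by (metis floor_correct of_int_1 of_int_add)
  have f1: "1 \<le> \<lfloor>1/y\<rfloor>" using y1 by (simp add: le_floor_iff)
  then show "1 \<le> b" unfolding b_def using nat_mono[OF f1] by simp
  have "real b * y \<le> 1" using lo assms(1) by (simp add: le_divide_eq)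
  moreover have "real b * y \<noteq> 1"
  proof
    assume "real b * y = 1"
    then have "y = 1 / real b" using assms(1) \<open>1 \<le> b\<close> by (auto simp: field_simps)
    then have "y \<in> \<rat>" by simp
    with assms(3) show False by simp
  qed
  ultimately show "0 < 1 - real b * y" by simp
  have "1 < (real b + 1) * y" using hi assms(1) by (simp add: divide_less_eq)
  then have "1 / real (b+1) < y" by (simp add: divide_less_eq mult.commute add.commute)
  then have "real b / real (b+1) < real b * y"
    using \<open>1 \<le> b\<close> by (simp add: mult_strict_left_mono[of "1 / real (b+1)" y "real b", simplified])
  moreover have "1 - real b / real (b+1) = 1 / real (b+1)" by (simp add: field_simps)
  ultimately show "1 - real b * y < 1 / real (b+1)" by linarith
  show "1 - real b*y \<notin> \<rat>"
  proof
    assume "1 - real b*y \<in> \<rat>"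
    then obtain t where t: "t \<in> \<rat>" "1 - real b * y = t" by blast
    then have "y = (1 - t) / real b" using \<open>1 \<le> b\<close> by (auto simp: field_simps)
    moreover have "(1 - t) / real b \<in> \<rat>" using t(1) by simp
    ultimately show False using assms(3) by simp
  qed
qed

lemma exist:
  fixes x :: real
  assumes x: "0 < x" "x < 1" "x \<notin> \<rat>"
  shows "\<exists>q. incr q \<and> T q = x"
proof -
  define r where "r = rec_nat x (\<lambda>_ y. 1 - real (nat \<lfloor>1/y\<rfloor>) * y)"
  define a where "a k = nat \<lfloor>1 / r k\<rfloor>" for k
  have r0: "r 0 = x" unfolding r_def by simp
  have rS: "r (Suc k) = 1 - real (a k) * r k" for k unfolding r_def a_def by simp
  have inv: "0 < r k \<and> r k < 1 \<and> r k \<notin> \<rat>" for k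
  proof (induction k)
    case 0 then show ?case using x r0 by simp
  next
    case (Suc k)
    have "0 < r (Suc k)" "r (Suc k) < 1 / real (a k + 1)" "r (Suc k) \<notin> \<rat>"
      using step[of "r k"] Suc unfolding rS a_def by auto
    moreover have "1 / real (a k + 1) \<le> 1" by simp
    ultimately show ?case by linarith
  qed
  have a1: "1 \<le> a k" for k using step(1)[of "r k"] inv[of k] unfolding a_def by auto
  have ainc: "a k < a (Suc k)" for k
  proof -
    have rs: "0 < r (Suc k)" "r (Suc k) < 1 / real (a k + 1)"
      using step[of "r k"] inv[of k] unfolding rS a_def by auto
    then have "real (a k + 1) < 1 / r (Suc k)"
      by (simp add: less_divide_eq divide_less_eq mult.commute)
    then have "int (a k + 1) \<le> \<lfloor>1 / r (Suc k)\<rfloor>"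
      by (simp add: le_floor_iff)
    then show ?thesis unfolding a_def[of "Suc k"] by linarith
  qed
  have incr: "incr a" unfolding incr_def using a1 ainc by auto
  define P where "P k = (\<Prod>j<k. real (a j))" for k
  have Ppos: "0 < P k" for k unfolding P_def using a1 by (intro prod_pos) (simp add: Suc_le_eq)
  have PS: "P (Suc k) = P k * real (a k)" for k unfolding P_def by simp
  have AP: "A a k = 1 / P (Suc k)" for k unfolding A_def P_def by (simp add: lessThan_Suc_atMost)
  have ident: "x = (\<Sum>j<k. (-1)^j * A a j) + (-1)^k * r k / P k" for k
  proof (induction k)
    case 0 then show ?case using r0 by (simp add: P_def)
  next
    case (Suc k)
    have ak: "real (a k) > 0" using a1[of k] by simp
    have rk: "r k = (1 - r (Suc k)) / real (a k)" using rS[of k] ak by (simp add: field_simps)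
    have "(-1)^k * r k / P k = (-1)^k * A a k + (-1)^(Suc k) * r (Suc k) / P (Suc k)"
      unfolding rk AP PS using ak Ppos[of k] by (simp add: field_simps)
    then show ?case using Suc by simp
  qed
  have "(\<lambda>k. (-1)^k * r k / P k) \<longlonglongrightarrow> 0"
  proof -
    have "(\<lambda>k. (-1)^(Suc k) * r (Suc k) / P (Suc k)) \<longlonglongrightarrow> 0"
    proof (rule Lim_null_comparison[OF _ A_lim[OF incr]])
      show "\<forall>\<^sub>F k in sequentially. norm ((-1)^(Suc k) * r (Suc k) / P (Suc k)) \<le> A a k"
      proof (intro always_eventually allI)
        fix k
        have "norm ((-1)^(Suc k) * r (Suc k) / P (Suc k)) = r (Suc k) / P (Suc k)"
          using inv[of "Suc k"] Ppos[of "Suc k"] by (simp add: abs_mult)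
        also have "\<dots> \<le> 1 / P (Suc k)"
          using inv[of "Suc k"] Ppos[of "Suc k"] by (intro divide_right_mono) auto
        finally show "norm ((-1)^(Suc k) * r (Suc k) / P (Suc k)) \<le> A a k" by (simp add: AP)
      qed
    qed
    then show ?thesis by (rule filterlim_sequentially_Suc[THEN iffD1])
  qed
  then have "(\<lambda>k. x - (-1)^k * r k / P k) \<longlonglongrightarrow> x - 0" by (intro tendsto_diff tendsto_const)
  moreover have "x - (-1)^k * r k / P k = (\<Sum>j<k. (-1)^j * A a j)" for k using ident[of k] by simp
  ultimately have "(\<lambda>k. (-1)^k * A a k) sums x" unfolding sums_def by simp
  then have "T a = x" using T_sums[OF incr] sums_unique2 by blast
  then show ?thesis using incr by blast
qed

definition Sg :: "(nat \<Rightarrow> nat) \<Rightarrow> nat \<Rightarrow> nat" where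
  "Sg g j = (\<Sum>i\<le>j. g i)"

lemma obar_term_Sg: "obar_term g k = (-1)^k * A (Sg g) k"
  unfolding obar_term_def A_def Sg_def by simp

lemma incr_Sg: assumes "\<forall>k. 1 \<le> g k" shows "incr (Sg g)"
  unfolding incr_def
proof (intro conjI allI)
  show "1 \<le> Sg g 0" using assms by (simp add: Sg_def)
  fix k
  have "Sg g (Suc k) = Sg g k + g (Suc k)" by (simp add: Sg_def)
  then show "Sg g k < Sg g (Suc k)" using assms[rule_format, of "Suc k"] by simp
qed

lemma Sg_inj: assumes "Sg g = Sg h" shows "g = h"
proof (rule ext)
  fix k
  show "g k = h k"
  proof (cases k)
    case 0 then show ?thesis using fun_cong[OF assms, of 0] by (simp add: Sg_def)
  next
    case (Suc m)
    have "Sg g (Suc m) = Sg g m + g (Suc m)" "Sg h (Suc m) = Sg h m + h (Suc m)"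
      by (simp_all add: Sg_def)
    moreover have "Sg g m = Sg h m" "Sg g (Suc m) = Sg h (Suc m)"
      using fun_cong[OF assms, of m] fun_cong[OF assms, of "Suc m"] by simp_all
    ultimately have "g (Suc m) = h (Suc m)" by linarith
    then show ?thesis using Suc by simp
  qed
qed

lemma Sg_surj:
  assumes "incr q"
  shows "\<exists>g. (\<forall>k. 1 \<le> g k) \<and> Sg g = q"
proof -
  define g where "g k = (if k = 0 then q 0 else q k - q (k - 1))" for k
  have "Sg g j = q j" for j
  proof (induction j)
    case 0 then show ?case by (simp add: Sg_def g_def)
  next
    case (Suc j)
    have "Sg g (Suc j) = Sg g j + g (Suc j)" by (simp add: Sg_def)
    moreover have "q j < q (Suc j)" using assms unfolding incr_def by simp
    moreover have "g (Suc j) = q (Suc j) - q j" by (simp add: g_def)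
    ultimately show ?case using Suc.IH by simp
  qed
  moreover have "1 \<le> g k" for k using assms unfolding incr_def g_def
    by (cases k) (auto simp: Suc_le_eq)
  ultimately show ?thesis by blast
qed

lemma unique_exp:
  fixes x :: real
  assumes x: "0 < x" "x < 1" "x \<notin> \<rat>"
  shows "\<exists>!g. (\<forall>k. 1 \<le> g k) \<and> obar_term g sums x"
proof -
  obtain q where q: "incr q" "T q = x" using exist[OF x] by blast
  obtain g where g: "\<forall>k. 1 \<le> g k" "Sg g = q" using Sg_surj[OF q(1)] by blast
  have qx: "(\<lambda>k. (-1)^k * A q k) sums x" using T_sums[OF q(1)] unfolding q(2) .
  have gs: "obar_term g sums x" unfolding obar_term_Sg g(2) by (rule qx)
  have un: "h = g" if h: "(\<forall>k. 1 \<le> h k) \<and> obar_term h sums x" for h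
  proof -
    have h1: "\<forall>k. 1 \<le> h k" using h by (rule conjunct1)
    have "(\<lambda>k. (-1)^k * A (Sg h) k) sums x" using h unfolding obar_term_Sg by (rule conjunct2)
    then have "T (Sg h) = x" by (rule sums_unique2[OF T_sums[OF incr_Sg[OF h1]]])
    then have "T (Sg h) = T (Sg g)" unfolding g(2) q(2) .
    then have "Sg h = Sg g" by (rule T_inj[OF incr_Sg[OF h1] incr_Sg[OF g(1)]])
    then show ?thesis by (rule Sg_inj)
  qed
  show ?thesis
  proof (rule ex1I[of _ g])
    show "(\<forall>k. 1 \<le> g k) \<and> obar_term g sums x" using g(1) gs by (rule conjI)
    show "\<And>h. (\<forall>k. 1 \<le> h k) \<and> obar_term h sums x \<Longrightarrow> h = g" by (rule un)
  qed
qed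

lemma Omega_digits:
  assumes "x \<in> Omega n"
  shows "\<forall>k. obar_digits x k \<in> {1..n}" "\<forall>k. 1 \<le> obar_digits x k"
    "obar_term (obar_digits x) sums x"
proof -
  have x: "0 < x" "x < 1" "x \<notin> \<rat>" and d: "\<forall>k\<ge>1. obar_symbol k x \<in> {1..n}"
    using assms unfolding Omega_def by auto
  have "(\<forall>k. 1 \<le> obar_digits x k) \<and> obar_term (obar_digits x) sums x"
    unfolding obar_digits_def by (rule theI'[OF unique_exp[OF x]])
  then show "\<forall>k. 1 \<le> obar_digits x k" "obar_term (obar_digits x) sums x" by auto
  show "\<forall>k. obar_digits x k \<in> {1..n}"
  proof
    fix k show "obar_digits x k \<in> {1..n}" using d[rule_format, of "Suc k"] by (simp add: obar_symbol_def)
  qed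
qed



lemma obar_rem:
  assumes g: "\<forall>k. 1 \<le> g k" and s: "obar_term g sums x"
  shows "\<bar>x - (\<Sum>k<m. obar_term g k)\<bar> \<le> 1 / fact (Suc m)"
proof -
  have i: "incr (Sg g)" by (rule incr_Sg[OF g])
  have "(\<lambda>k. (-1)^k * A (Sg g) k) sums x" using s unfolding obar_term_Sg .
  then have x: "x = T (Sg g)" using sums_unique2[OF T_sums[OF i]] by simp
  have "(\<Sum>k<m. obar_term g k) = (\<Sum>k<m. (-1)^k * A (Sg g) k)" unfolding obar_term_Sg ..
  then show ?thesis using T_rem[OF i, of m] A_le[OF i, of m] x by simp
qed

lemma obar_term_cong:
  assumes "\<And>i. i \<le> k \<Longrightarrow> g i = h i"
  shows "obar_term g k = obar_term h k"
proof -
  have "(\<Prod>j\<le>k. real (\<Sum>i\<le>j. g i)) = (\<Prod>j\<le>k. real (\<Sum>i\<le>j. h i))"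
  proof (rule prod.cong[OF refl])
    fix j assume "j \<in> {..k}"
    then have "(\<Sum>i\<le>j. g i) = (\<Sum>i\<le>j. h i)" using assms by (intro sum.cong) auto
    then show "real (\<Sum>i\<le>j. g i) = real (\<Sum>i\<le>j. h i)" by simp
  qed
  then show ?thesis unfolding obar_term_def by simp
qed

definition cen :: "nat \<Rightarrow> nat \<Rightarrow> real set" where
  "cen n m = (\<lambda>w. \<Sum>k<m. obar_term (\<lambda>i. w ! i) k) ` {w. set w \<subseteq> {1..n} \<and> length w = m}"

lemma cen_finite: "finite (cen n m)"
  unfolding cen_def by (intro finite_imageI finite_lists_length_eq) simp

lemma cen_card: "card (cen n m) \<le> n ^ m"
proof -
  have "card (cen n m) \<le> card {w. set w \<subseteq> {1..n} \<and> length w = m}"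
    unfolding cen_def by (rule card_image_le) (intro finite_lists_length_eq, simp)
  also have "\<dots> = n ^ m" by (subst card_lists_length_eq) simp_all
  finally show ?thesis .
qed

lemma cen_mem:
  assumes "\<forall>k. g k \<in> {1..n}"
  shows "(\<Sum>k<m. obar_term g k) \<in> cen n m"
proof -
  define w where "w = map g [0..<m]"
  have w: "set w \<subseteq> {1..n} \<and> length w = m" unfolding w_def using assms by auto
  have "(\<Sum>k<m. obar_term (\<lambda>i. w ! i) k) = (\<Sum>k<m. obar_term g k)"
  proof (rule sum.cong[OF refl])
    fix k assume "k \<in> {..<m}"
    then show "obar_term (\<lambda>i. w ! i) k = obar_term g k"
      by (intro obar_term_cong) (simp add: w_def)
  qed
  then show ?thesis unfolding cen_def using w by (metis (mono_tags, lifting) image_eqI mem_Collect_eq)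
qed

lemma count_lim:
  fixes s :: real
  assumes "0 < s" "1 \<le> n"
  shows "(\<lambda>m. real n ^ m * (2 / fact (Suc m)) powr s) \<longlonglongrightarrow> 0"
proof -
  define c where "c = real n powr (1 / s)"
  have np: "0 < real n" using assms by simp
  have cp: "0 < c" unfolding c_def using np by simp
  have eq: "real n ^ m * (2 / fact (Suc m)) powr s = (2 * c ^ m / fact (Suc m)) powr s" for m
  proof -
    have cm: "(c ^ m) powr s = real n ^ m"
    proof -
      have "(c ^ m) powr s = (c powr real m) powr s" using powr_realpow[OF cp] by simp
      also have "\<dots> = real n powr (1 / s * (real m * s))" unfolding c_def by (simp add: powr_powr)
      also have "1 / s * (real m * s) = real m" using assms(1) by simp
      finally show ?thesis using powr_realpow[OF np] by simp
    qed
    have e1: "2 * c ^ m / fact (Suc m) = c ^ m * (2 / fact (Suc m))" by simp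
    have e2: "(c ^ m * (2 / fact (Suc m))) powr s = (c ^ m) powr s * (2 / fact (Suc m)) powr s"
      using cp by (intro powr_mult)
    show ?thesis unfolding e1 e2 cm by (rule refl)
  qed
  have b: "(\<lambda>m. 2 * c ^ m / fact (Suc m)) \<longlonglongrightarrow> 0"
  proof (rule Lim_null_comparison)
    have "(\<lambda>m. inverse (fact m) * c ^ m) \<longlonglongrightarrow> 0" by (rule summable_LIMSEQ_zero[OF summable_exp])
    then show "(\<lambda>m. 2 * (inverse (fact m) * c ^ m)) \<longlonglongrightarrow> 0"
      using tendsto_mult_right_zero by blast
    show "\<forall>\<^sub>F m in sequentially. norm (2 * c ^ m / fact (Suc m)) \<le> 2 * (inverse (fact m) * c ^ m)"
    proof (intro always_eventually allI)
      fix m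
      have f: "(fact m :: real) \<le> fact (Suc m)" by (rule fact_mono) simp
      have "norm (2 * c ^ m / fact (Suc m)) = 2 * c ^ m / fact (Suc m)" using cp by (simp del: fact_Suc)
      also have "\<dots> \<le> 2 * c ^ m / fact m"
        using cp f by (intro divide_left_mono) (simp_all del: fact_Suc)
      finally show "norm (2 * c ^ m / fact (Suc m)) \<le> 2 * (inverse (fact m) * c ^ m)"
        by (simp add: field_simps del: fact_Suc)
    qed
  qed
  have "(\<lambda>m. (2 * c ^ m / fact (Suc m)) powr s) \<longlonglongrightarrow> 0"
    by (rule tendsto_zero_powrI[OF b tendsto_const]) (use cp assms(1) in \<open>auto intro!: always_eventually simp del: fact_Suc\<close>)
  then show ?thesis unfolding eq .
qed

lemma pre_zero:
  fixes s \<delta> :: real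
  assumes s: "0 < s" and n: "1 \<le> n" and d: "0 < \<delta>"
  shows "hausdorff_pre s \<delta> (Omega n) = 0"
proof -
  have "hausdorff_pre s \<delta> (Omega n) \<le> 0"
  proof (rule ennreal_le_epsilon)
    fix e :: real assume e: "0 < e"
    have l1: "(\<lambda>m. 2 * (1 / fact (Suc m)) :: real) \<longlonglongrightarrow> 0"
      using tendsto_mult_right_zero[OF fact_inv_lim] by simp
    have ev: "eventually (\<lambda>m. 2 * (1 / fact (Suc m)) < \<delta> \<and> real n ^ m * (2 / fact (Suc m)) powr s < e) sequentially"
      using order_tendstoD(2)[OF l1 d] order_tendstoD(2)[OF count_lim[OF s n] e]
      by (rule eventually_conj)
    then obtain m where m: "2 * (1 / fact (Suc m)) < \<delta>" "real n ^ m * (2 / fact (Suc m)) powr s < e"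
      unfolding eventually_sequentially by blast
    define \<rho> where "\<rho> = 1 / (fact (Suc m) :: real)"
    have \<rho>0: "0 \<le> \<rho>" unfolding \<rho>_def by (simp del: fact_Suc)
    define C where "C = cen n m"
    define N where "N = card C"
    obtain h where h: "bij_betw h {0..<N} C" unfolding N_def using ex_bij_betw_nat_finite[OF cen_finite[of n m]] C_def by blast
    define U where "U i = (if i < N then cball (h i) \<rho> else {})" for i
    have cov: "Omega n \<subseteq> (\<Union>i. U i)"
    proof
      fix x assume x: "x \<in> Omega n"
      note D = Omega_digits[OF x]
      define c where "c = (\<Sum>k<m. obar_term (obar_digits x) k)"
      have "c \<in> C" unfolding c_def C_def by (rule cen_mem[OF D(1)])
      then obtain i where i: "i < N" "h i = c" using bij_betw_imp_surj_on[OF h] by force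
      have "dist c x \<le> \<rho>" using obar_rem[OF D(2) D(3), of m] unfolding c_def \<rho>_def dist_real_def
        by (simp add: abs_minus_commute del: fact_Suc)
      then have "x \<in> U i" unfolding U_def using i by simp
      then show "x \<in> (\<Union>i. U i)" by blast
    qed
    have Ub: "bounded (U i) \<and> diameter (U i) \<le> \<delta>" for i
      unfolding U_def using m(1) \<rho>0 d unfolding \<rho>_def by (auto simp del: fact_Suc)
    have "hausdorff_pre s \<delta> (Omega n) \<le> (\<Sum>i. ennreal (diameter (U i) powr s))"
      unfolding hausdorff_pre_def using cov Ub by (intro INF_lower) auto
    also have "(\<Sum>i. ennreal (diameter (U i) powr s)) = (\<Sum>i\<in>{..<N}. ennreal (diameter (U i) powr s))"
      by (rule suminf_finite) (auto simp: U_def)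
    also have "\<dots> = (\<Sum>i\<in>{..<N}. ennreal ((2 * \<rho>) powr s))"
      by (rule sum.cong) (use \<rho>0 in \<open>auto simp: U_def\<close>)
    also have "\<dots> = ennreal (real N * (2 * \<rho>) powr s)"
      by (simp add: ennreal_of_nat_eq_real_of_nat ennreal_mult)
    also have "\<dots> \<le> ennreal e"
    proof (rule ennreal_leI)
      have "real N \<le> real n ^ m" unfolding N_def C_def using cen_card[of n m]
        by (metis of_nat_le_iff of_nat_power)
      then have "real N * (2 * \<rho>) powr s \<le> real n ^ m * (2 * \<rho>) powr s"
        by (intro mult_right_mono) auto
      also have "\<dots> < e" using m(2) unfolding \<rho>_def by simp
      finally show "real N * (2 * \<rho>) powr s \<le> e" by simp
    qed
    finally show "hausdorff_pre s \<delta> (Omega n) \<le> 0 + ennreal e" by simp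
  qed
  then show ?thesis by simp
qed

lemma H_zero:
  fixes s :: real
  assumes s: "0 < s" and n: "1 \<le> n"
  shows "hausdorff_measure s (Omega n) = 0"
proof -
  have "(SUP \<delta>\<in>{0<..}. hausdorff_pre s \<delta> (Omega n)) = (SUP \<delta>\<in>{0::real<..}. (0::ennreal))"
    by (rule SUP_cong) (auto intro: pre_zero[OF s n])
  also have "\<dots> = 0" by (rule SUP_const) (use gt_ex in blast)
  finally show ?thesis unfolding hausdorff_measure_def .
qed

theorem theorem3:
  fixes n :: nat
  assumes "n \<ge> 1"
  shows "hausdorff_dim (Omega n) = 0"
proof -
  have S: "{ereal s | s. 0 < s \<and> hausdorff_measure s (Omega n) = 0} = {ereal s | s. 0 < s}"
    using H_zero[OF _ assms] by auto
  have "Inf {ereal s | s. 0 < s} \<le> 0"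
  proof (rule ereal_le_epsilon2)
    fix e :: real assume "0 < e"
    then have "Inf {ereal s | s. 0 < s} \<le> ereal e" by (intro Inf_lower) auto
    then show "Inf {ereal s | s. 0 < s} \<le> 0 + ereal e" by simp
  qed
  moreover have "0 \<le> Inf {ereal s | s. 0 < s}" by (rule Inf_greatest) auto
  ultimately show ?thesis unfolding hausdorff_dim_def S by simp
qed

end
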